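(* Let $(P,\mathcal{L})$ be a linear system with $|\mathcal{L}| > \nu_2(P,\mathcal{L})$. Let $p,q\in P$ be two distinct points such that $\deg(p)=\Delta(P,\mathcal{L})$ and $\deg(q)=\max\{\deg(x): x\in P\setminus\{p\}\}$. If $$|\mathcal{L}| \le \deg(p)+\deg(q)+\nu_2(P,\mathcal{L})-3,$$ then $\tau(P,\mathcal{L}) \le \nu_2(P,\mathcal{L})-1$.
   Context: A linear system is a pair $(P,\mathcal{L})$ where $P$ is a finite set (of points) and $\mathcal{L}$ is a family of subsets of $P$ (lines) such that $|l\cap l'|\le 1$ for every pair of distinct $l,l'\in\mathcal{L}$. A transversal is a set $T\subseteq P$ with $T\cap l\neq\emptyset$ for every $l\in\mathcal{L}$; $\tau(P,\mathcal{L})$ is the minimum cardinality of a transversal. A 2-packing is a set $R\subseteq\mathcal{L}$ such that no three distinct lines of $R$ have a common point; $\nu_2(P,\mathcal{L})$ is the maximum cardinality of a 2-packing. For $x\in P$, $\mathcal{L}_x$ is the set of lines containing $x$, $\deg(x)=|\mathcal{L}_x|$, and $\Delta(P,\mathcal{L})=\max_{x\in P}\deg(x)$. *)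

theory Defs
  imports Main
begin

definition linear_system :: "'a set \<Rightarrow> 'a set set \<Rightarrow> bool" where
  "linear_system P L \<longleftrightarrow> finite P \<and> (\<forall>l\<in>L. l \<subseteq> P \<and> l \<noteq> {}) \<and>
     (\<forall>l\<in>L. \<forall>l'\<in>L. l \<noteq> l' \<longrightarrow> card (l \<inter> l') \<le> 1)"

definition is_transversal :: "'a set \<Rightarrow> 'a set set \<Rightarrow> 'a set \<Rightarrow> bool" where
  "is_transversal P L T \<longleftrightarrow> T \<subseteq> P \<and> (\<forall>l\<in>L. T \<inter> l \<noteq> {})"

definition tau :: "'a set \<Rightarrow> 'a set set \<Rightarrow> nat" where
  "tau P L = Min {card T | T. is_transversal P L T}"

definition is_2packing :: "'a set set \<Rightarrow> 'a set set \<Rightarrow> bool" where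
  "is_2packing L R \<longleftrightarrow> R \<subseteq> L \<and>
     (\<forall>l1\<in>R. \<forall>l2\<in>R. \<forall>l3\<in>R. l1 \<noteq> l2 \<and> l1 \<noteq> l3 \<and> l2 \<noteq> l3 \<longrightarrow> l1 \<inter> l2 \<inter> l3 = {})"

definition nu2 :: "'a set \<Rightarrow> 'a set set \<Rightarrow> nat" where
  "nu2 P L = Max {card R | R. is_2packing L R}"

definition deg :: "'a set set \<Rightarrow> 'a \<Rightarrow> nat" where
  "deg L x = card {l \<in> L. x \<in> l}"

definition max_deg :: "'a set \<Rightarrow> 'a set set \<Rightarrow> nat" where
  "max_deg P L = Max (deg L ` P)"

end

theory Submission
  imports Defs
begin

lemma ls_finL: "linear_system P L \<Longrightarrow> finite L"
  unfolding linear_system_def by (meson Pow_iff finite_Pow_iff rev_finite_subset subsetI)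

lemma tau_le: assumes "linear_system P L" "is_transversal P L T" shows "tau P L \<le> card T"
proof -
  have fP: "finite P" using assms(1) linear_system_def by blast
  have "{card T |T. is_transversal P L T} \<subseteq> card ` Pow P"
    unfolding is_transversal_def by blast
  hence "finite {card T |T. is_transversal P L T}" using fP by (meson finite_Pow_iff finite_imageI finite_subset)
  thus ?thesis unfolding tau_def using assms(2) by (intro Min_le) auto
qed

lemma nu2_ge: assumes "linear_system P L" "is_2packing L R" shows "card R \<le> nu2 P L"
proof -
  have fL: "finite L" using assms(1) ls_finL by blast
  have "{card R |R. is_2packing L R} \<subseteq> card ` Pow L"
    unfolding is_2packing_def by blast
  hence "finite {card R |R. is_2packing L R}" using fL by (meson finite_Pow_iff finite_imageI finite_subset)
  thus ?thesis unfolding nu2_def using assms(2) by (intro Max_ge) auto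
qed

lemma cover_ex: assumes "finite S" "\<forall>l\<in>S. l \<noteq> {}"
  shows "\<exists>C. C \<subseteq> \<Union>S \<and> card C \<le> card S \<and> (\<forall>l\<in>S. C \<inter> l \<noteq> {})"
proof (intro exI conjI)
  let ?C = "(\<lambda>l. SOME x. x \<in> l) ` S"
  have h: "\<forall>l\<in>S. (SOME x. x \<in> l) \<in> l" using assms(2) by (metis all_not_in_conv someI_ex)
  show "?C \<subseteq> \<Union>S" using h by blast
  show "card ?C \<le> card S" by (rule card_image_le[OF assms(1)])
  show "\<forall>l\<in>S. ?C \<inter> l \<noteq> {}" using h by blast
qed

lemma two_pts_line: assumes "linear_system P L" "l \<in> L" "l' \<in> L" "x \<in> l" "x \<in> l'" "y \<in> l" "y \<in> l'" "x \<noteq> y"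
  shows "l = l'"
proof (rule ccontr)
  assume "l \<noteq> l'"
  hence "card (l \<inter> l') \<le> 1" using assms(1,2,3) unfolding linear_system_def by auto
  moreover have "finite (l \<inter> l')" using assms(1,2) unfolding linear_system_def by (meson finite_Int finite_subset)
  moreover have "{x,y} \<subseteq> l \<inter> l'" using assms by blast
  ultimately have "card {x,y} \<le> 1" by (meson card_mono le_trans)
  thus False using assms(8) by simp
qed

lemma disj_aux: "\<not> (\<exists>m1\<in>M. \<exists>m2\<in>M. m1 \<noteq> m2 \<and> m1 \<inter> m2 \<noteq> {}) \<Longrightarrow> \<forall>m1\<in>M. \<forall>m2\<in>M. x \<in> m1 \<longrightarrow> x \<in> m2 \<longrightarrow> m1 = m2"
  by blast

lemma triple_aux:
  assumes L: "l1 \<in> insert l0 (insert a (insert b0 M))" "l2 \<in> insert l0 (insert a (insert b0 M))" "l3 \<in> insert l0 (insert a (insert b0 M))"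
  and D: "l1 \<noteq> l2" "l1 \<noteq> l3" "l2 \<noteq> l3" and X: "x \<in> l1" "x \<in> l2" "x \<in> l3"
  and F1: "\<forall>m1\<in>M. \<forall>m2\<in>M. x \<in> m1 \<longrightarrow> x \<in> m2 \<longrightarrow> m1 = m2"
  and N3: "\<not> (x \<in> l0 \<and> x \<in> a \<and> x \<in> b0)"
  and NM: "\<forall>m\<in>M. x \<in> m \<longrightarrow> \<not> (x \<in> l0 \<and> x \<in> a) \<and> \<not> (x \<in> l0 \<and> x \<in> b0) \<and> \<not> (x \<in> a \<and> x \<in> b0)"
  shows False
proof (cases "\<exists>m\<in>M. x \<in> m")
  case True
  then obtain m where m: "m \<in> M" "x \<in> m" by blast
  have am: "\<forall>u\<in>{l0,a,b0}. \<forall>v\<in>{l0,a,b0}. x \<in> u \<longrightarrow> x \<in> v \<longrightarrow> u = v" using NM m by blast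
  have e1: "l1 = m \<or> l1 \<in> {l0,a,b0}" using L(1) X(1) F1 m by blast
  have e2: "l2 = m \<or> l2 \<in> {l0,a,b0}" using L(2) X(2) F1 m by blast
  have e3: "l3 = m \<or> l3 \<in> {l0,a,b0}" using L(3) X(3) F1 m by blast
  show False using e1 e2 e3 am D X by metis
next
  case False
  have "l1 \<in> {l0,a,b0}" "l2 \<in> {l0,a,b0}" "l3 \<in> {l0,a,b0}" using L X False by auto
  then have "x \<in> l0 \<and> x \<in> a \<and> x \<in> b0" using D X by auto
  thus False using N3 by blast
qed

theorem theorem2p1:
  fixes P :: "'a set" and L :: "'a set set" and p q :: 'a
  assumes "linear_system P L"
    and "card L > nu2 P L"
    and "p \<in> P" and "q \<in> P" and "p \<noteq> q"
    and "deg L p = max_deg P L"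
    and "deg L q = Max (deg L ` (P - {p}))"
    and "int (card L) \<le> int (deg L p) + int (deg L q) + int (nu2 P L) - 3"
  shows "int (tau P L) \<le> int (nu2 P L) - 1"
proof -
  note ls = assms(1)
  have fL: "finite L" using ls ls_finL by blast
  have sub: "\<forall>l\<in>L. l \<subseteq> P \<and> l \<noteq> {}" using ls unfolding linear_system_def by blast
  define A where "A = {l\<in>L. p \<in> l}"
  define B where "B = {l\<in>L. q \<in> l}"
  define M where "M = L - (A \<union> B)"
  define \<nu> where "\<nu> = nu2 P L"
  have dA: "deg L p = card A" unfolding A_def deg_def by simp
  have dB: "deg L q = card B" unfolding B_def deg_def by simp
  have fA: "finite A" "finite B" "finite M" using fL unfolding A_def B_def M_def by auto
  have hyp: "int (card L) \<le> int (card A) + int (card B) + int \<nu> - 3"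
    using assms(8) dA dB \<nu>_def by simp
  have cUI: "card A + card B = card (A \<union> B) + card (A \<inter> B)" using fA card_Un_Int by blast
  have cL: "card L = card (A \<union> B) + card M"
  proof -
    have "A \<union> B \<subseteq> L" unfolding A_def B_def by blast
    hence "card M = card L - card (A \<union> B)" unfolding M_def using fL card_Diff_subset[of "A \<union> B" L] finite_subset[of "A \<union> B" L] by blast
    moreover have "card (A \<union> B) \<le> card L" using fL \<open>A \<union> B \<subseteq> L\<close> by (simp add: card_mono)
    ultimately show ?thesis by simp
  qed
  have LABM: "L = A \<union> B \<union> M" unfolding M_def A_def B_def by blast
  have transM: "int (tau P L) \<le> int (card C) + int (card X)"
    if "C \<subseteq> P" "\<forall>l\<in>M. C \<inter> l \<noteq> {}" "X \<subseteq> P" "\<forall>l\<in>A \<union> B. X \<inter> l \<noteq> {}" for C X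
  proof -
    have "is_transversal P L (X \<union> C)" unfolding is_transversal_def using that LABM by blast
    hence "tau P L \<le> card (X \<union> C)" using tau_le ls by blast
    also have "\<dots> \<le> card X + card C" by (rule card_Un_le)
    finally show ?thesis by simp
  qed
  have pq: "{p,q} \<subseteq> P" "\<forall>l\<in>A \<union> B. {p,q} \<inter> l \<noteq> {}" using assms(3,4) unfolding A_def B_def by auto
  have coverM: "\<exists>C. C \<subseteq> P \<and> card C \<le> card S \<and> (\<forall>l\<in>S. C \<inter> l \<noteq> {})" if SL: "S \<subseteq> L" for S
  proof -
    have f1: "finite S" using SL fL finite_subset by blast
    have f2: "\<forall>l\<in>S. l \<noteq> {}" using SL sub by blast
    obtain C where C: "C \<subseteq> \<Union>S" "card C \<le> card S" "\<forall>l\<in>S. C \<inter> l \<noteq> {}"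
      using cover_ex[OF f1 f2] by blast
    have "C \<subseteq> P" using C(1) sub SL by blast
    thus ?thesis using C by blast
  qed
  have caseM3: "int (tau P L) \<le> int \<nu> - 1" if "int (card M) \<le> int \<nu> - 3"
  proof -
    obtain C where C: "C \<subseteq> P" "card C \<le> card M" "\<forall>l\<in>M. C \<inter> l \<noteq> {}"
      using coverM[of M] unfolding M_def by blast
    have "int (tau P L) \<le> int (card C) + int (card {p,q})" using transM[OF C(1) C(3) pq] .
    also have "card {p,q} = 2" using assms(5) by simp
    finally show ?thesis using C(2) that by linarith
  qed
  show ?thesis
  proof (cases "card B \<le> 1")
    case True
    obtain C where C: "C \<subseteq> P" "card C \<le> card (L - A)" "\<forall>l\<in>L - A. C \<inter> l \<noteq> {}"
      using coverM[of "L - A"] by blast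
    have "is_transversal P L (insert p C)" unfolding is_transversal_def using C assms(3) A_def by blast
    hence "tau P L \<le> card (insert p C)" using tau_le ls by blast
    also have "\<dots> \<le> Suc (card C)" by (simp add: card_insert_le_m1)
    finally have "tau P L \<le> Suc (card (L - A))" using C(2) by linarith
    moreover have "card (L - A) = card L - card A" using fL A_def by (simp add: card_Diff_subset)
    moreover have "card A \<le> card L" using fL A_def by (simp add: card_mono)
    ultimately show ?thesis using hyp True \<nu>_def by linarith
  next
    case Bbig: False
    show ?thesis
    proof (cases "A \<inter> B = {}")
      case True
      hence "card (A \<inter> B) = 0" by simp
      thus ?thesis using caseM3 hyp cUI cL \<nu>_def by linarith
    next
      case False
      then obtain l0 where l0: "l0 \<in> A \<inter> B" by blast
      have AB1: "A \<inter> B = {l0}"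
      proof
        show "A \<inter> B \<subseteq> {l0}" using l0 two_pts_line[OF ls, of _ l0 p q] assms(5) unfolding A_def B_def by blast
      qed (use l0 in blast)
      have Mle: "int (card M) \<le> int \<nu> - 2" using hyp cUI cL AB1 by simp
      have "card (B - {l0}) > 0" using Bbig AB1 fA by (simp add: card_Diff_singleton_if)
      then obtain b0 where b0: "b0 \<in> B" "b0 \<noteq> l0" by (metis card_gt_0_iff Diff_iff insert_iff ex_in_conv)
      show ?thesis
      proof (cases "\<exists>m1\<in>M. \<exists>m2\<in>M. m1 \<noteq> m2 \<and> m1 \<inter> m2 \<noteq> {}")
        case True
        then obtain m1 m2 x where mm: "m1 \<in> M" "m2 \<in> M" "m1 \<noteq> m2" "x \<in> m1" "x \<in> m2" by blast
        obtain C where C: "C \<subseteq> P" "card C \<le> card (M - {m1,m2})" "\<forall>l\<in>M - {m1,m2}. C \<inter> l \<noteq> {}"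
          using coverM[of "M - {m1,m2}"] unfolding M_def by blast
        have xP: "x \<in> P" using mm sub unfolding M_def by blast
        have "int (tau P L) \<le> int (card (insert x C)) + int (card {p,q})"
          by (rule transM) (use C mm xP pq in auto)
        moreover have "card (insert x C) \<le> Suc (card C)" by (simp add: card_insert_le_m1)
        moreover have "card (M - {m1,m2}) = card M - 2" using mm fA by (simp add: card_Diff_subset)
        moreover have "card {p,q} = 2" using assms(5) by simp
        moreover have "card M \<ge> 2" using mm fA
          by (metis card_2_iff card_mono empty_subsetI insert_subset)
        ultimately show ?thesis using C(2) Mle \<nu>_def by linarith
      next
        case Mdisj: False
        show ?thesis
        proof (cases "\<forall>a\<in>A - {l0}. \<exists>x\<in>a \<inter> b0. \<exists>m\<in>M. x \<in> m")
          case True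
          define g where "g m = (SOME x. x \<in> m \<and> (m \<inter> b0 \<noteq> {} \<longrightarrow> x \<in> b0))" for m
          have g: "g m \<in> m \<and> (m \<inter> b0 \<noteq> {} \<longrightarrow> g m \<in> b0)" if "m \<in> M" for m
          proof -
            have mL: "m \<in> L" using that unfolding M_def by simp
            have "m \<noteq> {}" using sub mL by simp
            hence "\<exists>x. x \<in> m \<and> (m \<inter> b0 \<noteq> {} \<longrightarrow> x \<in> b0)"
              by (cases "m \<inter> b0 = {}") auto
            thus ?thesis unfolding g_def by (rule someI_ex)
          qed
          have "is_transversal P L (insert q (g ` M))"
            unfolding is_transversal_def
          proof
            have "g m \<in> P" if "m \<in> M" for m
            proof -
              have "m \<in> L" using that unfolding M_def by simp
              thus ?thesis using sub g[OF that] by blast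
            qed
            thus "insert q (g ` M) \<subseteq> P" using assms(4) by blast
            show "\<forall>l\<in>L. insert q (g ` M) \<inter> l \<noteq> {}"
            proof
              fix l assume l: "l \<in> L"
              show "insert q (g ` M) \<inter> l \<noteq> {}"
              proof (cases "l \<in> B")
                case True thus ?thesis unfolding B_def by blast
              next
                case nB: False
                show ?thesis
                proof (cases "l \<in> M")
                  case True thus ?thesis using g by blast
                next
                  case False
                  hence la: "l \<in> A - {l0}" using l l0 nB LABM by blast
                  then obtain x m where xm: "x \<in> l" "x \<in> b0" "m \<in> M" "x \<in> m" using True by blast
                  have gm: "g m \<in> m" "g m \<in> b0" using g[OF xm(3)] xm by auto
                  have "m \<noteq> b0" using xm(3) b0 M_def by blast
                  hence "g m = x" using two_pts_line[OF ls, of m b0 "g m" x] gm xm b0 M_def B_def by blast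
                  thus ?thesis using xm by blast
                qed
              qed
            qed
          qed
          hence "tau P L \<le> card (insert q (g ` M))" using tau_le ls by blast
          also have "\<dots> \<le> Suc (card (g ` M))" by (simp add: card_insert_le_m1)
          finally have "tau P L \<le> Suc (card (g ` M))" .
          moreover have "card (g ` M) \<le> card M" using fA by (simp add: card_image_le)
          ultimately show ?thesis using Mle \<nu>_def by linarith
        next
          case False
          then obtain a where a: "a \<in> A" "a \<noteq> l0" "\<forall>x\<in>a \<inter> b0. \<forall>m\<in>M. x \<notin> m" by blast
          define R where "R = insert l0 (insert a (insert b0 M))"
          have "is_2packing L R"
            unfolding is_2packing_def
          proof
            show "R \<subseteq> L" unfolding R_def using l0 a b0 unfolding M_def A_def B_def by blast
          next
            show "\<forall>l1\<in>R. \<forall>l2\<in>R. \<forall>l3\<in>R. l1 \<noteq> l2 \<and> l1 \<noteq> l3 \<and> l2 \<noteq> l3 \<longrightarrow> l1 \<inter> l2 \<inter> l3 = {}"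
            proof (intro ballI impI)
              fix l1 l2 l3 assume l123: "l1 \<in> R" "l2 \<in> R" "l3 \<in> R" "l1 \<noteq> l2 \<and> l1 \<noteq> l3 \<and> l2 \<noteq> l3"
              show "l1 \<inter> l2 \<inter> l3 = {}"
              proof (rule ccontr)
                assume "l1 \<inter> l2 \<inter> l3 \<noteq> {}"
                then obtain x where x: "x \<in> l1" "x \<in> l2" "x \<in> l3" by blast
                have F1: "\<forall>m1\<in>M. \<forall>m2\<in>M. x \<in> m1 \<longrightarrow> x \<in> m2 \<longrightarrow> m1 = m2"
                  using disj_aux[OF Mdisj] .
                have "l0 \<in> A" "l0 \<in> B" "a \<in> A" "b0 \<in> B" using l0 a(1) b0(1) by auto
                hence l0L: "l0 \<in> L" "p \<in> l0" "q \<in> l0" and aL: "a \<in> L" "p \<in> a"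
                  and bL: "b0 \<in> L" "q \<in> b0" unfolding A_def B_def by simp_all
                have F2: "x \<in> l0 \<Longrightarrow> x \<in> a \<Longrightarrow> x = p"
                  using two_pts_line[OF ls l0L(1) aL(1), of x p] l0L aL a(2) by blast
                have F3: "x \<in> l0 \<Longrightarrow> x \<in> b0 \<Longrightarrow> x = q"
                  using two_pts_line[OF ls l0L(1) bL(1), of x q] l0L bL b0(2) by blast
                have F4: "\<And>m. x \<in> a \<Longrightarrow> x \<in> b0 \<Longrightarrow> m \<in> M \<Longrightarrow> x \<in> m \<Longrightarrow> False"
                  using a(3) by blast
                have pb: "p \<notin> b0" using two_pts_line[OF ls l0L(1) bL(1), of p q] l0L bL b0(2) assms(5) by blast
                have pM: "\<And>m. m \<in> M \<Longrightarrow> p \<notin> m" "\<And>m. m \<in> M \<Longrightarrow> q \<notin> m"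
                  unfolding M_def A_def B_def by auto
                have nM: "l0 \<notin> M" "a \<notin> M" "b0 \<notin> M" using l0 a b0 unfolding M_def by auto
                have N3: "\<not> (x \<in> l0 \<and> x \<in> a \<and> x \<in> b0)" using F2 pb by blast
                have NM: "\<forall>m\<in>M. x \<in> m \<longrightarrow> \<not> (x \<in> l0 \<and> x \<in> a) \<and> \<not> (x \<in> l0 \<and> x \<in> b0) \<and> \<not> (x \<in> a \<and> x \<in> b0)"
                  using F2 F3 F4 pM by blast
                have l123': "l1 \<in> insert l0 (insert a (insert b0 M))" "l2 \<in> insert l0 (insert a (insert b0 M))"
                  "l3 \<in> insert l0 (insert a (insert b0 M))" "l1 \<noteq> l2" "l1 \<noteq> l3" "l2 \<noteq> l3"
                  using l123 unfolding R_def by auto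
                show False using triple_aux[OF l123' x F1 N3 NM] .
              qed
            qed
          qed
          hence "card R \<le> \<nu>" using nu2_ge ls \<nu>_def by blast
          moreover have "card R = card M + 3"
          proof -
            have nM: "l0 \<notin> M" "a \<notin> M" "b0 \<notin> M" using l0 a b0 unfolding M_def by auto
            have "a \<noteq> b0" using a b0 AB1 by blast
            thus ?thesis unfolding R_def using nM a(2) b0(2) fA(3) by simp
          qed
          ultimately show ?thesis using caseM3 \<nu>_def by linarith
        qed
      qed
    qed
  qed
qed

end
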